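(* For all integers $n\ge 2$ and $1\le k<n$, the domination number of $H_B(n,k)$ is $\gamma(H_B(n,k))=\binom{n}{k}$.
   Context: Fix integers $n\ge 2$ and $1\le k<n$ and positive real numbers $x_1<x_2<\dots<x_n$. Let $\mathscr{B}_n=\{\pm x_1,\pm x_2,\dots,\pm x_{n-1},x_n\}$ (so $-x_n\notin\mathscr{B}_n$). Let $\phi(\mathscr{B}_n)$ be the family of all nonempty subsets $S\subseteq\mathscr{B}_n$ whose elements have pairwise distinct absolute values and whose element of largest absolute value is positive. Let $\mathscr{B}_n^+=\{x_1,\dots,x_n\}$, let $V_1$ be the set of all $k$-element subsets of $\mathscr{B}_n^+$, and let $V_2=\phi(\mathscr{B}_n)\setminus V_1$. For $A\in\phi(\mathscr{B}_n)$ put $A^\dagger=\{|a|:a\in A\}$. The bipartite Kneser B type-$k$ graph $H_B(n,k)$ is the simple graph with vertex set $V_1\cup V_2$ in which $X\in V_1$ and $Y\in V_2$ are adjacent if and only if $X\subseteq Y^\dagger$ or $Y^\dagger\subseteq X$, and there are no other edges. A dominating set is a set $S$ of vertices such that every vertex not in $S$ is adjacent to some vertex of $S$; the domination number is the minimum size of a dominating set. *)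

theory Defs
  imports Complex_Main
begin

definition dominating_set :: "'a set \<Rightarrow> ('a \<Rightarrow> 'a \<Rightarrow> bool) \<Rightarrow> 'a set \<Rightarrow> bool" where
  "dominating_set V E S \<longleftrightarrow> S \<subseteq> V \<and> (\<forall>v \<in> V - S. \<exists>u \<in> S. E v u)"

definition domination_number :: "'a set \<Rightarrow> ('a \<Rightarrow> 'a \<Rightarrow> bool) \<Rightarrow> nat" where
  "domination_number V E = (LEAST m. \<exists>S. dominating_set V E S \<and> finite S \<and> card S = m)"

definition Bset :: "(nat \<Rightarrow> real) \<Rightarrow> nat \<Rightarrow> real set" where
  "Bset x n = {x i | i. 1 \<le> i \<and> i \<le> n} \<union> {- x i | i. 1 \<le> i \<and> i \<le> n - 1}"

definition Bplus :: "(nat \<Rightarrow> real) \<Rightarrow> nat \<Rightarrow> real set" where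
  "Bplus x n = {x i | i. 1 \<le> i \<and> i \<le> n}"

definition phiB :: "(nat \<Rightarrow> real) \<Rightarrow> nat \<Rightarrow> real set set" where
  "phiB x n = {S. S \<subseteq> Bset x n \<and> S \<noteq> {} \<and> inj_on abs S \<and>
                  (\<exists>a \<in> S. 0 < a \<and> (\<forall>b \<in> S. \<bar>b\<bar> \<le> \<bar>a\<bar>))}"

definition dagger :: "real set \<Rightarrow> real set" where
  "dagger A = abs ` A"

definition HB_V1 :: "(nat \<Rightarrow> real) \<Rightarrow> nat \<Rightarrow> nat \<Rightarrow> real set set" where
  "HB_V1 x n k = {X. X \<subseteq> Bplus x n \<and> card X = k}"

definition HB_V2 :: "(nat \<Rightarrow> real) \<Rightarrow> nat \<Rightarrow> nat \<Rightarrow> real set set" where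
  "HB_V2 x n k = phiB x n - HB_V1 x n k"

definition HB_vertices :: "(nat \<Rightarrow> real) \<Rightarrow> nat \<Rightarrow> nat \<Rightarrow> real set set" where
  "HB_vertices x n k = HB_V1 x n k \<union> HB_V2 x n k"

definition HB_adj :: "(nat \<Rightarrow> real) \<Rightarrow> nat \<Rightarrow> nat \<Rightarrow> real set \<Rightarrow> real set \<Rightarrow> bool" where
  "HB_adj x n k A B \<longleftrightarrow>
     (A \<in> HB_V1 x n k \<and> B \<in> HB_V2 x n k \<and> (A \<subseteq> dagger B \<or> dagger B \<subseteq> A)) \<or>
     (B \<in> HB_V1 x n k \<and> A \<in> HB_V2 x n k \<and> (B \<subseteq> dagger A \<or> dagger A \<subseteq> B))"

end

theory Submission imports Defs begin

context
  fixes n k :: nat and x :: "nat \<Rightarrow> real"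
  assumes pos: "\<forall>i. 1 \<le> i \<and> i \<le> n \<longrightarrow> 0 < x i"
    and mono: "\<forall>i j. 1 \<le> i \<and> i < j \<and> j \<le> n \<longrightarrow> x i < x j"
begin

lemma x_less_iff: "i \<in> {1..n} \<Longrightarrow> j \<in> {1..n} \<Longrightarrow> x i < x j \<longleftrightarrow> i < j"
  using mono by (metis atLeastAtMost_iff less_asym linorder_neqE_nat)

lemma x_eq_iff: "i \<in> {1..n} \<Longrightarrow> j \<in> {1..n} \<Longrightarrow> x i = x j \<longleftrightarrow> i = j"
  using x_less_iff by (metis less_irrefl linorder_neqE_nat)

lemma x_inj: "inj_on x {1..n}"
  using x_eq_iff by (auto simp: inj_on_def)

lemma Bplus_eq: "Bplus x n = x ` {1..n}"
  unfolding Bplus_def by auto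

lemma card_Bplus: "card (Bplus x n) = n"
  using x_inj by (simp add: Bplus_eq card_image)

lemma finite_Bplus: "finite (Bplus x n)"
  by (simp add: Bplus_eq)

lemma Bplus_pos: "b \<in> Bplus x n \<Longrightarrow> 0 < b"
  using pos by (auto simp: Bplus_eq)

lemma Bset_abs: "b \<in> Bset x n \<Longrightarrow> \<bar>b\<bar> \<in> Bplus x n"
  using pos unfolding Bset_def Bplus_def by fastforce

lemma dagger_sub: "v \<subseteq> Bset x n \<Longrightarrow> dagger v \<subseteq> Bplus x n"
  using Bset_abs unfolding dagger_def by auto

lemma V1_finite: "finite (HB_V1 x n k)"
  unfolding HB_V1_def using finite_Bplus by simp

lemma V1_card: "card (HB_V1 x n k) = n choose k"
  unfolding HB_V1_def using n_subsets[OF finite_Bplus] card_Bplus by simp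

lemma ext_lemma:
  assumes "finite A" "D \<subseteq> A" "m \<le> card A"
  shows "\<exists>u. u \<subseteq> A \<and> card u = m \<and> (u \<subseteq> D \<or> D \<subseteq> u)"
proof (cases "m \<le> card D")
  case True
  then obtain u where "u \<subseteq> D" "card u = m" by (metis obtain_subset_with_card_n)
  then show ?thesis using assms by blast
next
  case False
  have fD: "finite D" using assms finite_subset by blast
  have "card (A - D) = card A - card D" using assms fD by (simp add: card_Diff_subset)
  then have "m - card D \<le> card (A - D)" using assms by simp
  then obtain E where E: "E \<subseteq> A - D" "card E = m - card D" "finite E" by (metis obtain_subset_with_card_n)
  have "card (D \<union> E) = card D + card E" using E fD by (subst card_Un_disjoint) auto
  then show ?thesis using E assms False by (intro exI[of _ "D \<union> E"]) auto
qed

lemma upper: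
  assumes "k \<le> n"
  shows "dominating_set (HB_vertices x n k) (HB_adj x n k) (HB_V1 x n k)"
  unfolding dominating_set_def
proof safe
  fix v assume "v \<in> HB_V1 x n k" then show "v \<in> HB_vertices x n k" by (simp add: HB_vertices_def)
next
  fix v assume v: "v \<in> HB_vertices x n k" "v \<notin> HB_V1 x n k"
  then have v2: "v \<in> HB_V2 x n k" by (simp add: HB_vertices_def)
  then have "v \<subseteq> Bset x n" by (simp add: HB_V2_def phiB_def)
  then have "dagger v \<subseteq> Bplus x n" by (rule dagger_sub)
  then obtain u where u: "u \<subseteq> Bplus x n" "card u = k" "u \<subseteq> dagger v \<or> dagger v \<subseteq> u"
    using ext_lemma[OF finite_Bplus] card_Bplus assms by metis
  then have "u \<in> HB_V1 x n k" by (simp add: HB_V1_def)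
  then show "\<exists>u\<in>HB_V1 x n k. HB_adj x n k v u" using u v2 unfolding HB_adj_def by blast
qed

definition pv :: "real set \<Rightarrow> real set" where
  "pv X = insert (- Min X) (X - {Min X})"

lemma pv_props:
  assumes k2: "2 \<le> k" and X: "X \<in> HB_V1 x n k"
  shows "pv X \<in> HB_V2 x n k" "dagger (pv X) = X"
    "\<And>u. HB_adj x n k (pv X) u \<Longrightarrow> u = X"
proof -
  have XB: "X \<subseteq> Bplus x n" and cX: "card X = k" using X by (auto simp: HB_V1_def)
  have fX: "finite X" using XB finite_Bplus finite_subset by blast
  have neX: "X \<noteq> {}" using cX k2 by auto
  have posX: "\<And>y. y \<in> X \<Longrightarrow> 0 < y" using XB Bplus_pos by blast
  define m where "m = Min X"
  define M where "M = Max X"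
  have mX: "m \<in> X" and MX: "M \<in> X" using fX neX by (auto simp: m_def M_def)
  have "\<exists>y\<in>X. y \<noteq> m" proof (rule ccontr)
    assume "\<not> ?thesis" then have "X \<subseteq> {m}" by auto
    then have "card X \<le> 1" using card_mono[of "{m}" X] by simp
    then show False using cX k2 by simp
  qed
  then obtain y where y: "y \<in> X" "y \<noteq> m" by blast
  have "m \<le> y" using fX y by (simp add: m_def)
  moreover have "y \<le> M" using fX y by (simp add: M_def)
  ultimately have mM: "m < M" using y by simp
  obtain i where i: "i \<in> {1..n}" "m = x i" using mX XB by (auto simp: Bplus_eq)
  obtain j where j: "j \<in> {1..n}" "M = x j" using MX XB by (auto simp: Bplus_eq)
  have "i < j" using x_less_iff[OF i(1) j(1)] mM i j by simp
  then have "i \<le> n - 1" using j by auto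
  then have negB: "- m \<in> Bset x n" using i unfolding Bset_def by auto
  have BpB: "Bplus x n \<subseteq> Bset x n" unfolding Bset_def Bplus_def by auto
  have pvB: "pv X \<subseteq> Bset x n" unfolding pv_def m_def[symmetric] using negB XB BpB by auto
  have mpos: "0 < m" using posX mX by blast
  have ab: "abs ` (X - {m}) = X - {m}"
  proof (rule image_cong[where g=id, simplified])
    fix y assume "y \<in> X - {m}" then show "\<bar>y\<bar> = y" using posX[of y] by simp
  qed simp
  have dag: "dagger (pv X) = X"
    unfolding pv_def m_def[symmetric] dagger_def image_insert ab using mpos mX by (simp add: insert_absorb)
  then show "dagger (pv X) = X" .
  have fpv: "finite (pv X)" using fX by (simp add: pv_def)
  have nm: "- m \<notin> X" using posX[of "-m"] mpos by linarith
  have "card (X - {m}) + 1 = card X" using fX mX cX k2 by (simp add: card_Diff_singleton)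
  then have "card (pv X) = card X"
    unfolding pv_def m_def[symmetric] using fX nm by simp
  then have inj: "inj_on abs (pv X)" using dag fpv by (intro eq_card_imp_inj_on) (simp_all add: dagger_def)
  have Mpv: "M \<in> pv X" using MX mM unfolding pv_def m_def[symmetric] by auto
  have Mmax: "\<forall>b\<in>pv X. \<bar>b\<bar> \<le> M"
  proof
    fix b assume "b \<in> pv X" then have "\<bar>b\<bar> \<in> X" using dag unfolding dagger_def by blast
    then show "\<bar>b\<bar> \<le> M" using fX by (simp add: M_def)
  qed
  have phi: "pv X \<in> phiB x n"
  proof -
    have "0 < M" using mpos mM by linarith
    then have "\<exists>a\<in>pv X. 0 < a \<and> (\<forall>b\<in>pv X. \<bar>b\<bar> \<le> \<bar>a\<bar>)" using Mpv Mmax by (intro bexI[of _ M]) auto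
    then show ?thesis unfolding phiB_def using pvB inj Mpv by blast
  qed
  have "- m \<in> pv X" by (simp add: pv_def m_def)
  moreover have "- m \<notin> Bplus x n" using Bplus_pos[of "-m"] mpos by linarith
  ultimately have notV1: "pv X \<notin> HB_V1 x n k" unfolding HB_V1_def by blast
  show "pv X \<in> HB_V2 x n k" using phi notV1 by (simp add: HB_V2_def)
  fix u assume "HB_adj x n k (pv X) u"
  then have u: "u \<in> HB_V1 x n k" "u \<subseteq> X \<or> X \<subseteq> u" using notV1 dag unfolding HB_adj_def by auto
  then have "card u = k" "finite u" using finite_Bplus finite_subset by (auto simp: HB_V1_def)
  then show "u = X" using u(2) cX fX by (metis card_subset_eq)
qed

lemma lower_ge2:
  assumes k2: "2 \<le> k" and D: "dominating_set (HB_vertices x n k) (HB_adj x n k) S" and fS: "finite S"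
  shows "n choose k \<le> card S"
proof -
  have SV: "S \<subseteq> HB_vertices x n k" and dom: "\<forall>v \<in> HB_vertices x n k - S. \<exists>u \<in> S. HB_adj x n k v u"
    using D by (auto simp: dominating_set_def)
  define f where "f X = (if X \<in> S then X else pv X)" for X
  have fS': "f X \<in> S" if X: "X \<in> HB_V1 x n k" for X
  proof (cases "X \<in> S")
    case True then show ?thesis by (simp add: f_def)
  next
    case False
    have "pv X \<in> HB_vertices x n k" using pv_props(1)[OF k2 X] by (simp add: HB_vertices_def)
    moreover have "pv X \<in> S"
    proof (rule ccontr)
      assume "pv X \<notin> S"
      then obtain u where "u \<in> S" "HB_adj x n k (pv X) u" using dom calculation by blast
      then show False using pv_props(3)[OF k2 X] False by blast
    qed
    then show ?thesis using False by (simp add: f_def)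
  qed
  define g where "g Z = (if Z \<in> HB_V1 x n k then Z else dagger Z)" for Z
  have gf: "g (f X) = X" if X: "X \<in> HB_V1 x n k" for X
  proof (cases "X \<in> S")
    case True then show ?thesis using X by (simp add: f_def g_def)
  next
    case False
    have "pv X \<notin> HB_V1 x n k" using pv_props(1)[OF k2 X] unfolding HB_V2_def by blast
    then show ?thesis using False pv_props(2)[OF k2 X] by (simp add: f_def g_def)
  qed
  have "inj_on f (HB_V1 x n k)" by (rule inj_on_inverseI[of _ g]) (rule gf)
  then have "card (HB_V1 x n k) \<le> card S"
    using fS fS' by (intro card_inj_on_le[of f]) (auto simp del: )
  then show ?thesis using V1_card by simp
qed


lemma sing_V1: "i \<in> {1..n} \<Longrightarrow> {x i} \<in> HB_V1 x n 1"
  unfolding HB_V1_def Bplus_eq by auto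

lemma V1_1: "u \<in> HB_V1 x n 1 \<Longrightarrow> \<exists>l\<in>{1..n}. u = {x l}"
proof -
  assume u: "u \<in> HB_V1 x n 1"
  then have "card u = 1" "u \<subseteq> x ` {1..n}" unfolding HB_V1_def Bplus_eq by auto
  from \<open>card u = 1\<close> obtain a where a: "u = {a}" by (rule card_1_singletonE)
  then have "a \<in> x ` {1..n}" using \<open>u \<subseteq> x ` {1..n}\<close> by auto
  then show ?thesis using a by blast
qed

lemma V12_disj: "u \<in> HB_V2 x n kk \<Longrightarrow> u \<notin> HB_V1 x n kk"
  unfolding HB_V2_def by blast

lemma two_V2:
  assumes i: "i \<in> {1..n}" and j: "j \<in> {1..n}" and ij: "i < j" and s: "s = 1 \<or> s = -1"
  shows "{s * x i, x j} \<in> HB_V2 x n 1" "dagger {s * x i, x j} = {x i, x j}"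
proof -
  have xi: "0 < x i" "0 < x j" using pos i j by auto
  have lt: "x i < x j" using x_less_iff[OF i j] ij by simp
  have "i \<le> n - 1" using ij j by auto
  then have "s * x i \<in> Bset x n" using s i unfolding Bset_def by auto
  moreover have "x j \<in> Bset x n" using j unfolding Bset_def by auto
  ultimately have sub: "{s * x i, x j} \<subseteq> Bset x n" by auto
  have abs1: "\<bar>s * x i\<bar> = x i" using s xi by auto
  have abs2: "\<bar>x j\<bar> = x j" using xi by auto
  show dag: "dagger {s * x i, x j} = {x i, x j}" unfolding dagger_def using abs1 abs2 by simp
  have ne: "s * x i \<noteq> x j" using s xi lt by auto
  have inj: "inj_on abs {s * x i, x j}" using abs1 abs2 lt ne by (auto simp: inj_on_def)
  have ex: "\<exists>a\<in>{s * x i, x j}. 0 < a \<and> (\<forall>b\<in>{s * x i, x j}. \<bar>b\<bar> \<le> \<bar>a\<bar>)"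
    using abs1 abs2 lt xi by (intro bexI[of _ "x j"]) auto
  have phi: "{s * x i, x j} \<in> phiB x n" unfolding phiB_def using sub inj ex by blast
  have "card {s * x i, x j} = 2" using ne by simp
  then have "{s * x i, x j} \<notin> HB_V1 x n 1" unfolding HB_V1_def by auto
  then show "{s * x i, x j} \<in> HB_V2 x n 1" using phi unfolding HB_V2_def by blast
qed

lemma lower_1:
  assumes D: "dominating_set (HB_vertices x n 1) (HB_adj x n 1) S" and fS: "finite S"
  shows "n \<le> card S"
proof -
  have SV: "S \<subseteq> HB_vertices x n 1" and dom: "\<forall>v \<in> HB_vertices x n 1 - S. \<exists>u \<in> S. HB_adj x n 1 v u"
    using D by (auto simp: dominating_set_def)
  define T where "T = {i \<in> {1..n}. {x i} \<in> S}"
  define C where "C = {1..n} - T"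
  define S1 where "S1 = (\<lambda>i. {x i}) ` T"
  define S2 where "S2 = S \<inter> HB_V2 x n 1"
  have Tsub: "T \<subseteq> {1..n}" unfolding T_def by blast
  have cT: "card T \<le> n" using card_mono[OF _ Tsub] by simp
  have "card C = n - card T" unfolding C_def using Tsub by (simp add: card_Diff_subset finite_subset)
  then have TC: "card T + card C = n" using cT by simp
  have injT: "inj_on (\<lambda>i. {x i}) T" using x_eq_iff unfolding T_def inj_on_def by auto
  have cS1: "card S1 = card T" unfolding S1_def using injT by (simp add: card_image)
  have S1S: "S1 \<subseteq> S" unfolding S1_def T_def by auto
  have S2S: "S2 \<subseteq> S" unfolding S2_def by auto
  have disj: "S1 \<inter> S2 = {}"
  proof -
    have "S1 \<subseteq> HB_V1 x n 1" unfolding S1_def T_def using sing_V1 by auto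
    then show ?thesis unfolding S2_def using V12_disj by blast
  qed
  have fS12: "finite S1" "finite S2" using S1S S2S fS finite_subset by blast+
  have "card S1 + card S2 = card (S1 \<union> S2)" using fS12 disj by (simp add: card_Un_disjoint)
  also have "\<dots> \<le> card S" using S1S S2S fS by (intro card_mono) auto
  finally have main: "card T + card S2 \<le> card S" using cS1 by simp
  have adjV1: "u \<in> HB_V2 x n 1" if "v \<in> HB_V1 x n 1" "HB_adj x n 1 v u" for u v
    using that V12_disj unfolding HB_adj_def by blast
  have CS2: "card C \<le> card S2"
  proof (cases "card C \<le> 1")
    case True
    show ?thesis
    proof (cases "C = {}")
      case True then show ?thesis by simp
    next
      case False
      then obtain j where j: "j \<in> C" by blast
      then have j1: "j \<in> {1..n}" "{x j} \<notin> S" unfolding C_def T_def by auto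
      then have "{x j} \<in> HB_vertices x n 1 - S" using sing_V1 by (auto simp: HB_vertices_def)
      then obtain u where "u \<in> S" "HB_adj x n 1 {x j} u" using dom by blast
      then have "u \<in> S2" unfolding S2_def using adjV1 sing_V1[OF j1(1)] by blast
      then have "card S2 \<ge> 1" using fS12(2) card_0_eq[of S2] by fastforce
      then show ?thesis using True by simp
    qed
  next
    case False
    have fC: "finite C" unfolding C_def by simp
    have Cne: "C \<noteq> {}" using False by auto
    define m where "m = Max C"
    define i0 where "i0 = Min C"
    have mC: "m \<in> C" and i0C: "i0 \<in> C" using fC Cne by (auto simp: m_def i0_def)
    have "\<exists>y\<in>C. y \<noteq> m"
    proof (rule ccontr)
      assume "\<not> ?thesis" then have "C \<subseteq> {m}" by auto
      then have "card C \<le> 1" using card_mono[of "{m}" C] by simp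
      then show False using False by simp
    qed
    then obtain y where y: "y \<in> C" "y \<noteq> m" by blast
    have "i0 \<le> y" "y \<le> m" using fC y by (auto simp: m_def i0_def)
    then have i0m: "i0 < m" using y by simp
    have Crange: "C \<subseteq> {1..n}" unfolding C_def by auto
    have CnS: "\<And>l. l \<in> C \<Longrightarrow> {x l} \<notin> S" unfolding C_def T_def by auto
    define g where "g i = (if i = m then {x i0, x m} else {- x i, x m})" for i
    have gform: "\<exists>a\<in>C. \<exists>s. (s = 1 \<or> s = -1) \<and> a < m \<and> g i = {s * x a, x m}" if i: "i \<in> C" for i
    proof (cases "i = m")
      case True then show ?thesis using i0C i0m by (intro bexI[of _ i0] exI[of _ 1]) (auto simp: g_def)
    next
      case False
      have "i \<le> m" using fC i by (simp add: m_def)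
      then show ?thesis using False i by (intro bexI[of _ i] exI[of _ "-1"]) (auto simp: g_def)
    qed
    have gS2: "g i \<in> S2" if i: "i \<in> C" for i
    proof -
      obtain a s where a: "a \<in> C" "s = 1 \<or> s = -1" "a < m" "g i = {s * x a, x m}" using gform[OF i] by blast
      have ar: "a \<in> {1..n}" and mr: "m \<in> {1..n}" using a(1) mC Crange by auto
      have V2: "g i \<in> HB_V2 x n 1" and dg: "dagger (g i) = {x a, x m}"
        using two_V2[OF ar mr a(3) a(2)] a(4) by simp_all
      have "g i \<in> S"
      proof (rule ccontr)
        assume "g i \<notin> S"
        moreover have "g i \<in> HB_vertices x n 1" using V2 by (simp add: HB_vertices_def)
        ultimately obtain u where u: "u \<in> S" "HB_adj x n 1 (g i) u" using dom by blast
        then have uV1: "u \<in> HB_V1 x n 1" and uu: "u \<subseteq> dagger (g i) \<or> dagger (g i) \<subseteq> u"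
          using V2 V12_disj unfolding HB_adj_def by blast+
        obtain l where l: "l \<in> {1..n}" "u = {x l}" using V1_1[OF uV1] by blast
        have am: "x a \<noteq> x m" using x_eq_iff[OF ar mr] a(3) by simp
        have "{x l} \<subseteq> {x a, x m} \<or> {x a, x m} \<subseteq> {x l}" using uu unfolding dg l(2) .
        then have "x l = x a \<or> x l = x m" using am by auto
        then have "l = a \<or> l = m" using x_eq_iff[OF l(1) ar] x_eq_iff[OF l(1) mr] by simp
        then show False using CnS a(1) mC u l by auto
      qed
      then show ?thesis using V2 unfolding S2_def by blast
    qed
    have ginj: "inj_on g C"
    proof (rule inj_onI)
      fix i j assume i: "i \<in> C" and j: "j \<in> C" and e: "g i = g j"
      have pos': "\<And>l. l \<in> C \<Longrightarrow> 0 < x l" using pos Crange by auto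
      show "i = j"
      proof (cases "i = m"; cases "j = m")
        assume "i = m" "j = m" then show ?thesis by simp
      next
        assume "i = m" "j \<noteq> m"
        then have "- x j \<in> {x i0, x m}" using e by (auto simp: g_def)
        then show ?thesis using pos'[OF j] pos'[OF i0C] pos'[OF mC] by auto
      next
        assume "i \<noteq> m" "j = m"
        then have "- x i \<in> {x i0, x m}" using e by (auto simp: g_def)
        then show ?thesis using pos'[OF i] pos'[OF i0C] pos'[OF mC] by auto
      next
        assume "i \<noteq> m" "j \<noteq> m"
        then have "- x i \<in> {- x j, x m}" using e by (auto simp: g_def)
        then have "x i = x j" using pos'[OF i] pos'[OF mC] by auto
        moreover have "i \<in> {1..n}" "j \<in> {1..n}" using i j Crange by auto
        ultimately show ?thesis using x_eq_iff by blast
      qed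
    qed
    show ?thesis using card_inj_on_le[OF ginj _ fS12(2)] gS2 by blast
  qed
  show ?thesis using main CS2 TC by linarith
qed

end
theorem mainTheorem4:
  fixes n k :: nat and x :: "nat \<Rightarrow> real"
  assumes "2 \<le> n" and "1 \<le> k" and "k < n"
    and "\<forall>i. 1 \<le> i \<and> i \<le> n \<longrightarrow> 0 < x i"
    and "\<forall>i j. 1 \<le> i \<and> i < j \<and> j \<le> n \<longrightarrow> x i < x j"
  shows "domination_number (HB_vertices x n k) (HB_adj x n k) = n choose k"
  unfolding domination_number_def
proof (rule Least_equality)
  show "\<exists>S. dominating_set (HB_vertices x n k) (HB_adj x n k) S \<and> finite S \<and> card S = n choose k"
    using upper[OF assms(4,5), of k] V1_finite[OF assms(4,5), of k] V1_card[OF assms(4,5), of k] assms(3)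
    by (intro exI[of _ "HB_V1 x n k"]) simp
next
  fix m assume "\<exists>S. dominating_set (HB_vertices x n k) (HB_adj x n k) S \<and> finite S \<and> card S = m"
  then obtain S where S: "dominating_set (HB_vertices x n k) (HB_adj x n k) S" "finite S" "card S = m" by blast
  show "n choose k \<le> m"
  proof (cases "k = 1")
    case True
    then show ?thesis using lower_1[OF assms(4,5) S(1)[unfolded True] S(2)] S(3) True by simp
  next
    case False
    then have "2 \<le> k" using assms(2) by simp
    then show ?thesis using lower_ge2[OF assms(4,5) _ S(1) S(2)] S(3) by simp
  qed
qed

end
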